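(* Let $t$ be a positive integer and let $M$ be a matroid with the $(t,2t)$-property. Then $M$ has no restriction isomorphic to the uniform matroid $U_{t,3t}$.
   Context: A matroid $M$ has the $(t,2t)$-property if every $t$-element subset of $E(M)$ is contained in both a $2t$-element circuit and a $2t$-element cocircuit of $M$. *)

theory Defs
  imports Main
begin

definition matroid :: "'a set \<Rightarrow> ('a set \<Rightarrow> bool) \<Rightarrow> bool" where
  "matroid E indep \<longleftrightarrow>
     finite E \<and> indep {} \<and>
     (\<forall>X. indep X \<longrightarrow> X \<subseteq> E) \<and>
     (\<forall>X Y. indep Y \<and> X \<subseteq> Y \<longrightarrow> indep X) \<and>
     (\<forall>X Y. indep X \<and> indep Y \<and> card X < card Y \<longrightarrow>
        (\<exists>y\<in>Y - X. indep (insert y X)))"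

definition basis :: "'a set \<Rightarrow> ('a set \<Rightarrow> bool) \<Rightarrow> 'a set \<Rightarrow> bool" where
  "basis E indep B \<longleftrightarrow> indep B \<and> (\<forall>X. indep X \<and> B \<subseteq> X \<longrightarrow> X = B)"

definition circuit :: "'a set \<Rightarrow> ('a set \<Rightarrow> bool) \<Rightarrow> 'a set \<Rightarrow> bool" where
  "circuit E indep C \<longleftrightarrow> C \<subseteq> E \<and> \<not> indep C \<and> (\<forall>D. D \<subset> C \<longrightarrow> indep D)"

definition dual_indep :: "'a set \<Rightarrow> ('a set \<Rightarrow> bool) \<Rightarrow> 'a set \<Rightarrow> bool" where
  "dual_indep E indep X \<longleftrightarrow> X \<subseteq> E \<and> (\<exists>B. basis E indep B \<and> X \<inter> B = {})"

definition cocircuit :: "'a set \<Rightarrow> ('a set \<Rightarrow> bool) \<Rightarrow> 'a set \<Rightarrow> bool" where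
  "cocircuit E indep C \<longleftrightarrow> circuit E (dual_indep E indep) C"

definition t2t_property :: "nat \<Rightarrow> 'a set \<Rightarrow> ('a set \<Rightarrow> bool) \<Rightarrow> bool" where
  "t2t_property t E indep \<longleftrightarrow>
     (\<forall>T. T \<subseteq> E \<and> card T = t \<longrightarrow>
        (\<exists>C. circuit E indep C \<and> card C = 2 * t \<and> T \<subseteq> C) \<and>
        (\<exists>D. cocircuit E indep D \<and> card D = 2 * t \<and> T \<subseteq> D))"

definition restrict_indep :: "('a set \<Rightarrow> bool) \<Rightarrow> 'a set \<Rightarrow> 'a set \<Rightarrow> bool" where
  "restrict_indep indep X Y \<longleftrightarrow> indep Y \<and> Y \<subseteq> X"

definition uniform_indep :: "nat \<Rightarrow> nat \<Rightarrow> nat set \<Rightarrow> bool" where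
  "uniform_indep r n Y \<longleftrightarrow> Y \<subseteq> {0..<n} \<and> card Y \<le> r"

definition matroid_iso ::
  "'a set \<Rightarrow> ('a set \<Rightarrow> bool) \<Rightarrow> 'b set \<Rightarrow> ('b set \<Rightarrow> bool) \<Rightarrow> bool" where
  "matroid_iso E1 I1 E2 I2 \<longleftrightarrow>
     (\<exists>f. bij_betw f E1 E2 \<and> (\<forall>Y. Y \<subseteq> E1 \<longrightarrow> (I1 Y \<longleftrightarrow> I2 (f ` Y))))"

end

theory Submission
  imports Defs
begin

lemma m_fin: "matroid E indep \<Longrightarrow> finite E"
  unfolding matroid_def by blast
lemma m_sub: "matroid E indep \<Longrightarrow> indep X \<Longrightarrow> X \<subseteq> E"
  unfolding matroid_def by blast
lemma m_down: "matroid E indep \<Longrightarrow> indep Y \<Longrightarrow> X \<subseteq> Y \<Longrightarrow> indep X"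
  unfolding matroid_def by blast
lemma m_aug: "matroid E indep \<Longrightarrow> indep X \<Longrightarrow> indep Y \<Longrightarrow> card X < card Y \<Longrightarrow>
   \<exists>y\<in>Y - X. indep (insert y X)"
  unfolding matroid_def by blast

lemma big_indep_basis:
  assumes m: "matroid E indep" and B: "basis E indep B" and K: "indep K"
    and c: "card B \<le> card K"
  shows "basis E indep K"
  unfolding basis_def
proof (intro conjI allI impI)
  show "indep K" by fact
  fix Y assume Y: "indep Y \<and> K \<subseteq> Y"
  show "Y = K"
  proof (rule ccontr)
    assume ne: "Y \<noteq> K"
    have fE: "finite E" using m_fin[OF m] .
    have "Y \<subseteq> E" using m Y m_sub by blast
    hence fY: "finite Y" using fE finite_subset by blast
    have "card K < card Y" using Y ne fY by (simp add: psubset_card_mono psubsetI)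
    hence "card B < card Y" using c by linarith
    moreover have iB: "indep B" using B unfolding basis_def by blast
    ultimately obtain y where y: "y \<in> Y - B" "indep (insert y B)"
      using m_aug[OF m iB] Y by blast
    hence "insert y B = B" using B unfolding basis_def by blast
    thus False using y by blast
  qed
qed

theorem lemma5p2:
  fixes E :: "'a set" and indep :: "'a set \<Rightarrow> bool" and t :: nat
  assumes "0 < t"
    and "matroid E indep"
    and "t2t_property t E indep"
  shows "\<not> (\<exists>X. X \<subseteq> E \<and>
            matroid_iso X (restrict_indep indep X) {0..<3*t} (uniform_indep t (3*t)))"
proof
  assume "\<exists>X. X \<subseteq> E \<and>
            matroid_iso X (restrict_indep indep X) {0..<3*t} (uniform_indep t (3*t))"
  then obtain X f where XE: "X \<subseteq> E" and bij: "bij_betw f X {0..<3*t}"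
    and iso: "\<And>Y. Y \<subseteq> X \<Longrightarrow> (restrict_indep indep X Y \<longleftrightarrow> uniform_indep t (3*t) (f ` Y))"
    unfolding matroid_iso_def by blast
  have m: "matroid E indep" by fact
  have fE: "finite E" using m_fin[OF m] .
  have fX: "finite X" using finite_subset[OF XE fE] .
  have cX: "card X = 3*t" using bij bij_betw_same_card by fastforce
  have indX: "\<And>Y. Y \<subseteq> X \<Longrightarrow> indep Y \<longleftrightarrow> card Y \<le> t"
  proof -
    fix Y assume Y: "Y \<subseteq> X"
    have inj: "inj_on f Y" using inj_on_subset[OF bij_betw_imp_inj_on[OF bij] Y] .
    have "f ` Y \<subseteq> {0..<3*t}" using image_mono[OF Y, of f] bij_betw_imp_surj_on[OF bij] by simp
    thus "indep Y \<longleftrightarrow> card Y \<le> t"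
      using iso[OF Y] inj card_image[OF inj] Y
      unfolding restrict_indep_def uniform_indep_def by auto
  qed
  obtain T where T: "T \<subseteq> X" "card T = t"
    using obtain_subset_with_card_n[of t X] cX by auto
  have TE: "T \<subseteq> E \<and> card T = t" using T XE by blast
  note h = assms(3)[unfolded t2t_property_def, rule_format, OF TE]
  from h[THEN conjunct2] obtain D where D: "cocircuit E indep D" "card D = 2*t" "T \<subseteq> D"
    by blast
  have "T \<noteq> {}" using T assms(1) by auto
  then obtain x where x: "x \<in> T" by blast
  have DE: "D \<subseteq> E" and nd: "\<not> dual_indep E indep D"
    and md: "\<And>D'. D' \<subset> D \<Longrightarrow> dual_indep E indep D'"
    using D(1) unfolding cocircuit_def circuit_def by auto
  have xD: "x \<in> D" using x D by blast
  have "dual_indep E indep (D - {x})" using md xD by blast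
  then obtain B where B: "basis E indep B" and BD: "(D - {x}) \<inter> B = {}"
    unfolding dual_indep_def by blast
  have iB: "indep B" using B basis_def by blast
  have fD: "finite D" using finite_subset[OF DE fE] .
  have "card (X \<inter> D) \<le> 2*t" using D(2) card_mono[OF fD, of "X \<inter> D"] by simp
  moreover have "card (X - D) = card X - card (X \<inter> D)"
    using fX by (simp add: card_Diff_subset_Int)
  ultimately have "t \<le> card (X - D)" using cX by linarith
  then obtain S where S: "S \<subseteq> X - D" "card S = t"
    using obtain_subset_with_card_n[of t "X - D"] by blast
  have fS: "finite S" using card_ge_0_finite[of S] S(2) assms(1) by simp
  have iS: "indep S" using indX S by auto
  have xS: "x \<notin> S" using S xD by blast
  have dSx: "\<not> indep (insert x S)"
  proof -
    have "insert x S \<subseteq> X" using S x T by blast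
    moreover have "card (insert x S) = t + 1" using xS fS S by simp
    ultimately show ?thesis using indX by simp
  qed
  define I where "I = B - {x}"
  define F where "F = {K. S \<subseteq> K \<and> K \<subseteq> S \<union> I \<and> indep K}"
  have fB: "finite B" using finite_subset[OF m_sub[OF m iB] fE] .
  have fSI: "finite (S \<union> I)" using fS fB I_def by simp
  have "F \<subseteq> Pow (S \<union> I)" unfolding F_def by blast
  hence fF: "finite F" using fSI by (simp add: finite_subset)
  have SF: "S \<in> F" unfolding F_def using iS by auto
  define mx where "mx = Max (card ` F)"
  have "mx \<in> card ` F" unfolding mx_def using fF SF by (intro Max_in) auto
  then obtain K where KF: "K \<in> F" and cK: "card K = mx" by auto
  have maxK: "\<And>K'. K' \<in> F \<Longrightarrow> card K' \<le> card K"
    using cK fF mx_def by simp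
  have K: "S \<subseteq> K" "K \<subseteq> S \<union> I" "indep K" using KF F_def by auto
  have fK: "finite K" using finite_subset[OF K(2) fSI] .
  have "card B \<le> card K"
  proof (rule ccontr)
    assume "\<not> card B \<le> card K"
    hence "card K < card B" by simp
    then obtain b where b: "b \<in> B - K" "indep (insert b K)"
      using m_aug[OF m K(3) iB] by blast
    show False
    proof (cases "b = x")
      case True
      hence "indep (insert x S)" using b m_down[OF m] K(1)
        by (meson insert_mono)
      thus False using dSx by simp
    next
      case False
      hence "insert b K \<in> F" using b K unfolding F_def I_def by auto
      hence "card (insert b K) \<le> card K" using maxK by blast
      thus False using b fK by simp
    qed
  qed
  hence bK: "basis E indep K" using big_indep_basis[OF m B K(3)] by blast
  have "K \<inter> D = {}" using K(2) S BD I_def by blast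
  moreover have "D \<subseteq> E" by fact
  ultimately have "dual_indep E indep D" unfolding dual_indep_def using bK by blast
  thus False using nd by simp
qed

end
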